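(* Let $q-p=3$, $-1<p<2$ and $q>\frac{2p}{2-p}$, and let $r>1$. If $\frac{p(r^q-1)}{q(r^p-1)}\le r^2$, then $I(p,q,r,x)<r^2+1-\frac{r^2}{x^2}-x^2$ for all $x\in(1,r)$. If $\frac{p(r^q-1)}{q(r^p-1)}>r^2$, then $I(p,q,r,x)<r^2-2r+2x-x^2$ for all $x\in(1,r)$.
   Context: For $x\in(1,r)$: $I(p,q,r,x)=\big(1+\frac{r^q-1}{r^p-1}(x^p-1)\big)^{2/q}-x^2$ if $p\ne0$, and $I(0,q,r,x)=\big(1+\frac{r^q-1}{\log r}\log x\big)^{2/q}-x^2$. For $p=0$ the quantity $\frac{p(r^q-1)}{q(r^p-1)}$ is understood as its limit $\frac{r^q-1}{q\log r}$. *)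

theory Defs
  imports "HOL-Analysis.Analysis"
begin

definition I_fun :: "real \<Rightarrow> real \<Rightarrow> real \<Rightarrow> real \<Rightarrow> real" where
  "I_fun p q r x =
     (if p \<noteq> 0
      then (1 + (r powr q - 1) / (r powr p - 1) * (x powr p - 1)) powr (2 / q) - x\<^sup>2
      else (1 + (r powr q - 1) / ln r * ln x) powr (2 / q) - x\<^sup>2)"

text \<open>The quantity p(r^q-1)/(q(r^p-1)), with its limit value (r^q-1)/(q ln r) at p = 0.\<close>
definition K_ratio :: "real \<Rightarrow> real \<Rightarrow> real \<Rightarrow> real" where
  "K_ratio p q r =
     (if p \<noteq> 0 then p * (r powr q - 1) / (q * (r powr p - 1))
      else (r powr q - 1) / (q * ln r))"

end

theory Submission
  imports Defs
begin

lemma quasi_concave: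
  fixes L L' g P :: "real \<Rightarrow> real"
  assumes cont: "continuous_on {lo..hi} L"
    and der: "\<And>y. lo < y \<Longrightarrow> y < hi \<Longrightarrow> (L has_real_derivative L' y) (at y)"
    and eq: "\<And>y. lo < y \<Longrightarrow> y < hi \<Longrightarrow> L' y = g y * P y"
    and pos: "\<And>y. lo < y \<Longrightarrow> y < hi \<Longrightarrow> P y > 0"
    and mono: "\<And>y z. lo \<le> y \<Longrightarrow> y < z \<Longrightarrow> z \<le> hi \<Longrightarrow> g z < g y"
    and abc: "lo \<le> a" "a < b" "b < c" "c \<le> hi"
  shows "min (L a) (L c) < L b"
proof (cases "g b \<ge> 0")
  case True
  have "L a < L b"
  proof (rule DERIV_pos_imp_increasing_open[OF \<open>a<b\<close>])
    fix y assume y: "a < y" "y < b"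
    have "g y > g b" using mono[of y b] y abc by auto
    hence "L' y > 0" using eq[of y] pos[of y] y abc True by simp
    thus "\<exists>d. (L has_real_derivative d) (at y) \<and> 0 < d" using der[of y] y abc by auto
  next
    show "continuous_on {a..b} L" using cont by (rule continuous_on_subset) (use abc in auto)
  qed
  thus ?thesis by simp
next
  case False
  have "L c < L b"
  proof (rule DERIV_neg_imp_decreasing_open[OF \<open>b<c\<close>])
    fix y assume y: "b < y" "y < c"
    have "g y < g b" using mono[of b y] y abc by auto
    hence "L' y < 0" using eq[of y] pos[of y] y abc False by (simp add: mult_neg_pos)
    thus "\<exists>d. (L has_real_derivative d) (at y) \<and> d < 0" using der[of y] y abc by auto
  next
    show "continuous_on {b..c} L" using cont by (rule continuous_on_subset) (use abc in auto)
  qed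
  thus ?thesis by simp
qed

lemma bump:
  fixes D D' :: "real \<Rightarrow> real"
  assumes cont: "continuous_on {lo..hi} D"
    and der: "\<And>y. lo < y \<Longrightarrow> y < hi \<Longrightarrow> (D has_real_derivative D' y) (at y)"
    and "D lo \<ge> 0" "D hi = 0" "lo < x" "x < hi"
    and pat: "(\<forall>y. lo < y \<and> y < x \<longrightarrow> D' y > 0) \<or> (\<forall>y. x < y \<and> y < hi \<longrightarrow> D' y < 0)"
  shows "D x > 0"
  using pat
proof
  assume H: "\<forall>y. lo < y \<and> y < x \<longrightarrow> D' y > 0"
  have "D lo < D x"
  proof (rule DERIV_pos_imp_increasing_open[OF \<open>lo<x\<close>])
    fix y assume y: "lo < y" "y < x"
    have "y < hi" using y assms by linarith
    thus "\<exists>d. (D has_real_derivative d) (at y) \<and> 0 < d" using der[of y] H y by blast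
  next
    show "continuous_on {lo..x} D" using cont by (rule continuous_on_subset) (use assms in auto)
  qed
  thus ?thesis using assms by simp
next
  assume H: "\<forall>y. x < y \<and> y < hi \<longrightarrow> D' y < 0"
  have "D hi < D x"
  proof (rule DERIV_neg_imp_decreasing_open[OF \<open>x<hi\<close>])
    fix y assume y: "x < y" "y < hi"
    have "lo < y" using y assms by linarith
    thus "\<exists>d. (D has_real_derivative d) (at y) \<and> d < 0" using der[of y] H y by blast
  next
    show "continuous_on {x..hi} D" using cont by (rule continuous_on_subset) (use assms in auto)
  qed
  thus ?thesis using assms by simp
qed

lemma core_generic:
  fixes h h' e W :: "real \<Rightarrow> real" and p q r C :: real
  assumes r: "r > 1" and q: "q > 0" and C: "C > 0"
    and hc: "continuous_on {1..r} h" and hpos: "\<And>x. 1 \<le> x \<Longrightarrow> x \<le> r \<Longrightarrow> h x > 0"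
    and h1: "h 1 \<ge> 1" and hr: "h r = r\<^sup>2"
    and hd: "\<And>x. 1 < x \<Longrightarrow> x < r \<Longrightarrow> (h has_real_derivative h' x) (at x)"
    and ec: "continuous_on {1..r} e" and e1: "e 1 = 0" and er: "C * e r = r powr q - 1"
    and ed: "\<And>x. 1 < x \<Longrightarrow> x < r \<Longrightarrow> (e has_real_derivative x powr (p-1)) (at x)"
    and Wdef: "\<And>x. W x = q/2 * h x powr (q/2-1) * h' x * x powr (1-p)"
    and pat: "\<And>x. 1 < x \<Longrightarrow> x < r \<Longrightarrow>
        (\<forall>y. 1 < y \<and> y < x \<longrightarrow> W y > C) \<or> (\<forall>y. x < y \<and> y < r \<longrightarrow> W y < C)"
    and x: "1 < x" "x < r"
  shows "h x powr (q/2) > 1 + C * e x"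
proof -
  define D where "D y = h y powr (q/2) - 1 - C * e y" for y
  define D' where "D' y = q/2 * h y powr (q/2-1) * h' y - C * y powr (p-1)" for y
  have Dc: "continuous_on {1..r} D" unfolding D_def
    by (intro continuous_intros hc ec) (use hpos in fastforce)
  have Dd: "(D has_real_derivative D' y) (at y)" if "1 < y" "y < r" for y
  proof -
    have "h y > 0" using hpos that by auto
    show ?thesis unfolding D_def D'_def
      by (rule derivative_eq_intros refl hd ed that | use \<open>h y > 0\<close> in simp)+
  qed
  have D'W: "D' y = y powr (p-1) * (W y - C)" if "y > 0" for y
  proof -
    have "y powr (p-1) * y powr (1-p) = 1" using that by (simp add: powr_add[symmetric])
    thus ?thesis unfolding D'_def Wdef by (simp add: algebra_simps)
  qed
  have sgn: "(D' y > 0 \<longleftrightarrow> W y > C) \<and> (D' y < 0 \<longleftrightarrow> W y < C)" if "y > 0" for y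
    using D'W[OF that] that by (simp add: zero_less_mult_iff mult_less_0_iff)
  have "D x > 0"
  proof (rule bump[OF Dc Dd])
    show "D 1 \<ge> 0" unfolding D_def using h1 e1 q by (simp add: ge_one_powr_ge_zero)
    have "r\<^sup>2 = r powr 2" using r by (simp add: powr_numeral)
    hence "r\<^sup>2 powr (q/2) = r powr q" by (simp add: powr_powr)
    thus "D r = 0" unfolding D_def using hr er r by simp
    show "(\<forall>y. 1 < y \<and> y < x \<longrightarrow> D' y > 0) \<or> (\<forall>y. x < y \<and> y < r \<longrightarrow> D' y < 0)"
      using pat[OF x] sgn by auto
  qed (use x in auto)
  thus ?thesis unfolding D_def by simp
qed

lemma ln_mult4: "0 < (a::real) \<Longrightarrow> 0 < b \<Longrightarrow> 0 < c \<Longrightarrow> 0 < d \<Longrightarrow>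
  ln (a * b * c * d) = ln a + ln b + ln c + ln d"
  by (simp add: ln_mult)

lemma case1:
  fixes p q r C :: real and e :: "real \<Rightarrow> real"
  assumes qp: "q = p + 3" and p: "-1 < p" "p < 2" and r: "r > 1" and C: "C > 0" "C \<le> q * r\<^sup>2"
    and ec: "continuous_on {1..r} e" and e1: "e 1 = 0" and er: "C * e r = r powr q - 1"
    and ed: "\<And>x. 1 < x \<Longrightarrow> x < r \<Longrightarrow> (e has_real_derivative x powr (p-1)) (at x)"
    and x: "1 < x" "x < r"
  shows "(r\<^sup>2 + 1 - r\<^sup>2 / x\<^sup>2) powr (q/2) > 1 + C * e x"
proof -
  define h where "h y = r\<^sup>2 + 1 - r\<^sup>2 / y\<^sup>2" for y :: real
  define h' where "h' y = 2 * r\<^sup>2 / y ^ 3" for y :: real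
  define W where "W y = q/2 * h y powr (q/2-1) * h' y * y powr (1-p)" for y
  define L where "L y = ln (q/2) + (q/2-1) * ln (h y) + ln (2 * r\<^sup>2) - 3 * ln y + (1-p) * ln y" for y
  define L' where "L' y = (q/2-1) * (h' y / h y) - 3 / y + (1-p) / y" for y
  define g where "g y = (p+1) * r\<^sup>2 - (p+2) * (y\<^sup>2 * h y)" for y
  define P where "P y = 1 / (y^3 * h y)" for y
  have q0: "q > 0" using qp p by simp
  have hpos: "h y > 0" if "1 \<le> y" for y
  proof -
    have "1 \<le> y\<^sup>2" using that by (simp add: one_le_power)
    hence "r\<^sup>2 \<le> r\<^sup>2 * y\<^sup>2" by (simp add: mult_le_cancel_left1)
    hence "r\<^sup>2 / y\<^sup>2 \<le> r\<^sup>2" using that by (simp add: divide_le_eq)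
    thus ?thesis unfolding h_def by simp
  qed
  have hc: "continuous_on {1..r} h" unfolding h_def by (intro continuous_intros) auto
  have hd: "(h has_real_derivative h' y) (at y)" if "1 < y" for y
    unfolding h_def h'_def using that
    by (auto intro!: derivative_eq_intros simp: field_simps power2_eq_square power3_eq_cube)
  have Wpos: "W y > 0" if "1 \<le> y" for y
    unfolding W_def h'_def using hpos[OF that] q0 that r by simp
  have LW: "L y = ln (W y)" if "1 \<le> y" for y
  proof -
    have "ln (W y) = ln (q/2) + ln (h y powr (q/2-1)) + ln (h' y) + ln (y powr (1-p))"
      unfolding W_def using hpos[OF that] q0 that r
      by (intro ln_mult4) (auto simp: h'_def)
    also have "ln (h' y) = ln (2 * r\<^sup>2) - 3 * ln y"
      unfolding h'_def using that r by (simp add: ln_div ln_realpow)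
    finally show ?thesis unfolding L_def using hpos[OF that] that by simp
  qed
  have Lc: "continuous_on {1..r} L" unfolding L_def
    by (intro continuous_intros hc) (use hpos in fastforce)+
  have Ld: "(L has_real_derivative L' y) (at y)" if "1 < y" "y < r" for y
  proof -
    have "h y > 0" using hpos that by auto
    show ?thesis unfolding L_def L'_def
      by (rule derivative_eq_intros refl hd that | use \<open>h y > 0\<close> that in simp)+
  qed
  have Leq: "L' y = g y * P y" if "1 < y" "y < r" for y
  proof -
    have "h y > 0" using hpos that by auto
    thus ?thesis unfolding L'_def g_def P_def h'_def using that qp
      by (simp add: field_simps power2_eq_square power3_eq_cube)
  qed
  have Ppos: "P y > 0" if "1 < y" "y < r" for y
    unfolding P_def using hpos[of y] that by simp
  have gmono: "g z < g y" if "1 \<le> y" "y < z" "z \<le> r" for y z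
  proof -
    have "y\<^sup>2 < z\<^sup>2" using that by (simp add: power_strict_mono)
    hence "(r\<^sup>2+1) * y\<^sup>2 < (r\<^sup>2+1) * z\<^sup>2"
      by (intro mult_strict_left_mono) (auto intro: add_nonneg_pos)
    moreover have "y\<^sup>2 * h y = (r\<^sup>2+1) * y\<^sup>2 - r\<^sup>2" "z\<^sup>2 * h z = (r\<^sup>2+1) * z\<^sup>2 - r\<^sup>2"
      unfolding h_def using that by (auto simp: field_simps)
    ultimately show ?thesis unfolding g_def using p
      by (smt (verit, best) mult_strict_left_mono)
  qed
  have quasi: "min (L a) (L c) < L b" if "1 \<le> a" "a < b" "b < c" "c \<le> r" for a b c
    by (rule quasi_concave[OF Lc Ld Leq Ppos gmono that]) 
  have L1: "L 1 = ln (q * r\<^sup>2)"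
    unfolding L_def h_def using q0 r by (simp add: ln_mult ln_div)
  have L1C: "L 1 \<ge> ln C" unfolding L1 using C by simp
  have WL: "(W y > C \<longleftrightarrow> L y > ln C) \<and> (W y < C \<longleftrightarrow> L y < ln C)" if "1 \<le> y" for y
    using LW[OF that] Wpos[OF that] C by simp
  have pat: "(\<forall>y. 1 < y \<and> y < x \<longrightarrow> W y > C) \<or> (\<forall>y. x < y \<and> y < r \<longrightarrow> W y < C)"
    if "1 < x" "x < r" for x
  proof (cases "L x \<ge> ln C")
    case True
    { fix y assume y: "1 < y" "y < x"
      have "min (L 1) (L x) < L y" using quasi[of 1 y x] y that by simp
      hence "W y > C" using WL[of y] True L1C y by simp }
    thus ?thesis by blast
  next
    case False
    { fix y assume y: "x < y" "y < r"
      have "min (L 1) (L y) < L x" using quasi[of 1 x y] y that by simp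
      hence "W y < C" using WL[of y] False L1C y that by simp }
    thus ?thesis by blast
  qed
  have "h x powr (q/2) > 1 + C * e x"
    by (rule core_generic[OF r q0 C(1) hc _ _ _ hd ec e1 er ed W_def pat x])
      (use hpos r in \<open>auto simp: h_def\<close>)
  thus ?thesis unfolding h_def .
qed

lemma case2:
  fixes p q r C :: real and e :: "real \<Rightarrow> real"
  assumes qp: "q = p + 3" and p: "-1 < p" "p < 2" and r: "r > 1" and C: "C > 0" "C > q * r\<^sup>2"
    and ec: "continuous_on {1..r} e" and e1: "e 1 = 0" and er: "C * e r = r powr q - 1"
    and ed: "\<And>x. 1 < x \<Longrightarrow> x < r \<Longrightarrow> (e has_real_derivative x powr (p-1)) (at x)"
    and x: "1 < x" "x < r"
  shows "(r\<^sup>2 - 2 * r + 2 * x) powr (q/2) > 1 + C * e x"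
proof -
  define h where "h y = r\<^sup>2 - 2 * r + 2 * y" for y :: real
  define h' where "h' y = (2::real)" for y :: real
  define W where "W y = q/2 * h y powr (q/2-1) * h' y * y powr (1-p)" for y
  define L where "L y = ln (q/2) + (q/2-1) * ln (h y) + ln 2 + (1-p) * ln y" for y
  define L' where "L' y = (q/2-1) * (2 / h y) + (1-p) / y" for y
  define g where "g y = (p+1) * y + (1-p) * h y" for y
  define P where "P y = 1 / (y * h y)" for y
  have q0: "q > 0" using qp p by simp
  have hpos: "h y > 0" if "1 \<le> y" for y
  proof -
    have "0 < (r-1)\<^sup>2 + 1" by (simp add: add_nonneg_pos)
    also have "\<dots> \<le> h y" unfolding h_def using that by (simp add: power2_eq_square algebra_simps)
    finally show ?thesis .
  qed
  have hc: "continuous_on {1..r} h" unfolding h_def by (intro continuous_intros)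
  have hd: "(h has_real_derivative h' y) (at y)" for y
    unfolding h_def h'_def by (auto intro!: derivative_eq_intros)
  have Wpos: "W y > 0" if "1 \<le> y" for y
    unfolding W_def h'_def using hpos[OF that] q0 that r by simp
  have LW: "L y = ln (W y)" if "1 \<le> y" for y
  proof -
    have "ln (W y) = ln (q/2) + ln (h y powr (q/2-1)) + ln (h' y) + ln (y powr (1-p))"
      unfolding W_def using hpos[OF that] q0 that r
      by (intro ln_mult4) (auto simp: h'_def)
    thus ?thesis unfolding L_def h'_def using hpos[OF that] that by simp
  qed
  have Lc: "continuous_on {1..r} (\<lambda>y. - L y)" unfolding L_def
    by (intro continuous_intros hc) (use hpos in fastforce)+
  have Ld: "((\<lambda>y. - L y) has_real_derivative - L' y) (at y)" if "1 < y" "y < r" for y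
  proof -
    have "h y > 0" using hpos that by auto
    show ?thesis unfolding L_def L'_def
      by (rule derivative_eq_intros refl hd that | use \<open>h y > 0\<close> that in \<open>simp add: h'_def\<close>)+
  qed
  have Leq: "- L' y = (- g y) * P y" if "1 < y" "y < r" for y
  proof -
    have "h y > 0" using hpos that by auto
    thus ?thesis unfolding L'_def g_def P_def using that qp
      by (simp add: field_simps)
  qed
  have Ppos: "P y > 0" if "1 < y" "y < r" for y
    unfolding P_def using hpos[of y] that by simp
  have gmono: "- g z < - g y" if "1 \<le> y" "y < z" "z \<le> r" for y z
  proof -
    have "g y = (3 - p) * y + (1-p) * (r\<^sup>2 - 2*r)" "g z = (3 - p) * z + (1-p) * (r\<^sup>2 - 2*r)"
      unfolding g_def h_def by (auto simp: algebra_simps)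
    thus ?thesis using that p by (simp add: mult_strict_left_mono)
  qed
  have quasi: "min (- L a) (- L c) < - L b" if "1 \<le> a" "a < b" "b < c" "c \<le> r" for a b c
    by (rule quasi_concave[OF Lc Ld Leq Ppos gmono that]) 
  have Lr: "L r = ln (q * r\<^sup>2)"
  proof -
    have "h r = r\<^sup>2" unfolding h_def by simp
    hence "L r = ln (q/2) + (q/2-1) * (2 * ln r) + ln 2 + (1-p) * ln r"
      unfolding L_def using r by (simp add: ln_realpow)
    also have "\<dots> = ln q + 2 * ln r" using qp q0 by (simp add: ln_div algebra_simps)
    also have "\<dots> = ln (q * r\<^sup>2)" using q0 r by (simp add: ln_mult ln_realpow)
    finally show ?thesis .
  qed
  have LrC: "L r < ln C" unfolding Lr using C q0 r by simp
  have WL: "(W y > C \<longleftrightarrow> L y > ln C) \<and> (W y < C \<longleftrightarrow> L y < ln C)" if "1 \<le> y" for y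
    using LW[OF that] Wpos[OF that] C by simp
  have pat: "(\<forall>y. 1 < y \<and> y < x \<longrightarrow> W y > C) \<or> (\<forall>y. x < y \<and> y < r \<longrightarrow> W y < C)"
    if "1 < x" "x < r" for x
  proof (cases "L x < ln C")
    case True
    { fix y assume y: "x < y" "y < r"
      have "min (- L x) (- L r) < - L y" using quasi[of x y r] y that by simp
      hence "W y < C" using WL[of y] True LrC y that by simp }
    thus ?thesis by blast
  next
    case False
    { fix y assume y: "1 < y" "y < x"
      have "min (- L y) (- L r) < - L x" using quasi[of y x r] y that by simp
      hence "W y > C" using WL[of y] False LrC y that by simp }
    thus ?thesis by blast
  qed
  have "0 \<le> (r-1)\<^sup>2" by simp
  hence h1: "h 1 \<ge> 1" unfolding h_def by (simp add: power2_eq_square algebra_simps)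
  have "h x powr (q/2) > 1 + C * e x"
    by (rule core_generic[OF r q0 C(1) hc _ h1 _ hd ec e1 er ed W_def pat x])
      (use hpos r in \<open>auto simp: h_def\<close>)
  thus ?thesis unfolding h_def .
qed

lemma both:
  fixes p q r C :: real and e :: "real \<Rightarrow> real"
  assumes qp: "q = p + 3" and p: "-1 < p" "p < 2" and r: "r > 1" and C: "C > 0"
    and ec: "continuous_on {1..r} e" and e1: "e 1 = 0" and er: "C * e r = r powr q - 1"
    and ed: "\<And>x. 1 < x \<Longrightarrow> x < r \<Longrightarrow> (e has_real_derivative x powr (p-1)) (at x)"
  shows "(C \<le> q * r\<^sup>2 \<longrightarrow> (\<forall>x. 1 < x \<and> x < r \<longrightarrow>
            (1 + C * e x) powr (2/q) - x\<^sup>2 < r\<^sup>2 + 1 - r\<^sup>2 / x\<^sup>2 - x\<^sup>2))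
       \<and> (C > q * r\<^sup>2 \<longrightarrow> (\<forall>x. 1 < x \<and> x < r \<longrightarrow>
            (1 + C * e x) powr (2/q) - x\<^sup>2 < r\<^sup>2 - 2 * r + 2 * x - x\<^sup>2))"
proof -
  have q0: "q > 0" using qp p by simp
  have epos: "e x > 0" if "1 < x" "x < r" for x
  proof -
    have "e 1 < e x"
    proof (rule DERIV_pos_imp_increasing_open[OF \<open>1 < x\<close>])
      fix y assume "1 < y" "y < x"
      thus "\<exists>d. (e has_real_derivative d) (at y) \<and> 0 < d" using ed[of y] that by auto
    next
      show "continuous_on {1..x} e" using ec by (rule continuous_on_subset) (use that in auto)
    qed
    thus ?thesis using e1 by simp
  qed
  have fin: "(1 + C * e x) powr (2/q) < H" if "1 < x" "x < r" "H powr (q/2) > 1 + C * e x" "H > 0" for x H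
  proof -
    have "0 < 1 + C * e x" using epos[OF that(1,2)] C by (simp add: add_pos_pos)
    hence "(1 + C * e x) powr (2/q) < (H powr (q/2)) powr (2/q)"
      using that q0 by (intro powr_less_mono2) auto
    also have "\<dots> = H" using q0 that by (simp add: powr_powr)
    finally show ?thesis .
  qed
  show ?thesis
  proof (intro conjI impI allI)
    fix x assume CC: "C \<le> q * r\<^sup>2" and x: "1 < x \<and> x < r"
    have H: "(r\<^sup>2 + 1 - r\<^sup>2 / x\<^sup>2) powr (q/2) > 1 + C * e x"
      using case1[OF qp p r C CC ec e1 er ed] x by auto
    have "r\<^sup>2 / x\<^sup>2 < r\<^sup>2 + 1"
    proof -
      have "1 \<le> x\<^sup>2" using x by (simp add: one_le_power)
      hence "r\<^sup>2 \<le> r\<^sup>2 * x\<^sup>2" by (simp add: mult_le_cancel_left1)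
      hence "r\<^sup>2 / x\<^sup>2 \<le> r\<^sup>2" using x by (simp add: divide_le_eq)
      thus ?thesis by simp
    qed
    hence "(1 + C * e x) powr (2/q) < r\<^sup>2 + 1 - r\<^sup>2 / x\<^sup>2"
      using fin[OF _ _ H] x by auto
    thus "(1 + C * e x) powr (2/q) - x\<^sup>2 < r\<^sup>2 + 1 - r\<^sup>2 / x\<^sup>2 - x\<^sup>2" by simp
  next
    fix x assume CC: "C > q * r\<^sup>2" and x: "1 < x \<and> x < r"
    have H: "(r\<^sup>2 - 2 * r + 2 * x) powr (q/2) > 1 + C * e x"
      using case2[OF qp p r C CC ec e1 er ed] x by auto
    have "0 \<le> (r-1)\<^sup>2" by simp
    hence "0 < r\<^sup>2 - 2 * r + 2 * x" using x by (simp add: power2_eq_square algebra_simps)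
    hence "(1 + C * e x) powr (2/q) < r\<^sup>2 - 2 * r + 2 * x"
      using fin[OF _ _ H] x by auto
    thus "(1 + C * e x) powr (2/q) - x\<^sup>2 < r\<^sup>2 - 2 * r + 2 * x - x\<^sup>2" by simp
  qed
qed

theorem lemma7p4:
  fixes p q r :: real
  assumes "q - p = 3" and "-1 < p" and "p < 2" and "q > 2 * p / (2 - p)" and "r > 1"
  shows "(K_ratio p q r \<le> r\<^sup>2 \<longrightarrow>
            (\<forall>x. 1 < x \<and> x < r \<longrightarrow> I_fun p q r x < r\<^sup>2 + 1 - r\<^sup>2 / x\<^sup>2 - x\<^sup>2))
       \<and> (K_ratio p q r > r\<^sup>2 \<longrightarrow>
            (\<forall>x. 1 < x \<and> x < r \<longrightarrow> I_fun p q r x < r\<^sup>2 - 2 * r + 2 * x - x\<^sup>2))"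
proof -
  have qp: "q = p + 3" using assms by simp
  have q0: "q > 0" using assms by simp
  have r: "r > 1" using assms by simp
  have rq: "r powr q > 1" using powr_less_mono[of 0 q r] r q0 by simp
  show ?thesis
  proof (cases "p = 0")
    case False
    define C where "C = p * (r powr q - 1) / (r powr p - 1)"
    define e where "e y = (y powr p - 1) / p" for y :: real
    have rp: "(p > 0 \<and> r powr p > 1) \<or> (p < 0 \<and> r powr p < 1)"
      using False r powr_less_mono[of 0 p r] powr_less_mono[of p 0 r] by (cases "p > 0") auto
    have C0: "C > 0" unfolding C_def using rp rq
      by (auto simp: zero_less_divide_iff zero_less_mult_iff mult_less_0_iff)
    have rp1: "r powr p \<noteq> 1" using rp by auto
    have ec: "continuous_on {1..r} e" unfolding e_def
      by (intro continuous_intros) (use False in auto)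
    have e1: "e 1 = 0" unfolding e_def by simp
    have er: "C * e r = r powr q - 1" unfolding C_def e_def using False rp1
      by (simp add: field_simps)
    have ed: "(e has_real_derivative y powr (p-1)) (at y)" if "1 < y" "y < r" for y
      unfolding e_def using that False
      by (auto intro!: derivative_eq_intros)
    have K: "K_ratio p q r = C / q" unfolding K_ratio_def C_def using False by simp
    have Kiff1: "K_ratio p q r \<le> r\<^sup>2 \<longleftrightarrow> C \<le> q * r\<^sup>2" unfolding K using q0
      by (simp add: divide_le_eq mult.commute)
    have Kiff2: "K_ratio p q r > r\<^sup>2 \<longleftrightarrow> C > q * r\<^sup>2" unfolding K using q0
      by (simp add: less_divide_eq mult.commute)
    have Ieq: "I_fun p q r x = (1 + C * e x) powr (2/q) - x\<^sup>2" for x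
    proof -
      have "(r powr q - 1) / (r powr p - 1) * (x powr p - 1) = C * e x"
        unfolding C_def e_def using False rp1 by (simp add: field_simps)
      thus ?thesis unfolding I_fun_def using False by simp
    qed
    show ?thesis unfolding Kiff1 Kiff2 Ieq
      using both[OF qp assms(2,3) r C0 ec e1 er ed] by blast
  next
    case True
    define C where "C = (r powr q - 1) / ln r"
    define e where "e y = ln y" for y :: real
    have C0: "C > 0" unfolding C_def using rq r by simp
    have ec: "continuous_on {1..r} e" unfolding e_def
      by (intro continuous_intros) auto
    have e1: "e 1 = 0" unfolding e_def by simp
    have er: "C * e r = r powr q - 1" unfolding C_def e_def using r by simp
    have ed: "(e has_real_derivative y powr (p-1)) (at y)" if "1 < y" "y < r" for y
      unfolding e_def using that True
      by (auto intro!: derivative_eq_intros simp: powr_minus_divide)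
    have K: "K_ratio p q r = C / q" unfolding K_ratio_def C_def using True by simp
    have Kiff1: "K_ratio p q r \<le> r\<^sup>2 \<longleftrightarrow> C \<le> q * r\<^sup>2" unfolding K using q0
      by (simp add: divide_le_eq mult.commute)
    have Kiff2: "K_ratio p q r > r\<^sup>2 \<longleftrightarrow> C > q * r\<^sup>2" unfolding K using q0
      by (simp add: less_divide_eq mult.commute)
    have Ieq: "I_fun p q r x = (1 + C * e x) powr (2/q) - x\<^sup>2" for x
      unfolding I_fun_def C_def e_def using True by simp
    show ?thesis unfolding Kiff1 Kiff2 Ieq
      using both[OF qp assms(2,3) r C0 ec e1 er ed] by blast
  qed
qed

end
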